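(* Given $0<\lambda\le\Lambda$ and $N$, there exist $r_0,\alpha,\delta\in(0,1)$ depending only on $\lambda,\Lambda,N$ such that the following holds. Let $\rho\in(0,r_0)$, let $K\in L^\infty(B_{2\rho^2}\times B_1)$ with $\lambda\le K\le\Lambda$, and let $u\in L^1(B_{1+2\rho^2})\cap C^{Dini}_{loc}(B_{2\rho^2})$ satisfy: (i) $L_Ku\ge-\delta\,\ell^{\alpha-1}(\rho^2)$ in $B_{2\rho^2}$; (ii) $u(x)\ge-\big(\ell^\alpha(|x|)-\ell^\alpha(\rho)\big)_+$ for all $x\in B_{1+2\rho^2}$; (iii) $\mu\big(\{u\ge\ell^\alpha(\rho)/2\}\cap B_\rho\setminus B_{3\rho^2}\big)\ge\frac12\mu(B_\rho\setminus B_{3\rho^2})$, where $\mu(dx):=\ell(|x|)|x|^{-N}dx$. Then $\inf_{B_{\rho^2}}u\ge\ell^\alpha(\rho)-\ell^\alpha(\rho^2)$.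
   Context: $\ell(\rho):=|\ln(\min\{\rho,1/10\})|^{-1}$ for $\rho>0$. $B_r$ is the open ball of radius $r$ centered at $0$. $C^{Dini}_{loc}(U)$: functions that on every closed ball in $U$ admit a modulus of continuity $\omega$ with $\int_0^1\omega(\rho)\rho^{-1}d\rho<\infty$. $L_Ku(x):=\int_{B_1(x)}\frac{u(x)-u(y)}{|y-x|^N}K(x,y-x)\,dy$. *)

theory Defs
  imports "HOL-Analysis.Analysis"
begin

text \<open>ell rho = |ln (min rho (1/10))|^(-1); for rho = 0 this gives 0 (its limit).\<close>
definition ell :: "real \<Rightarrow> real" where
  "ell \<rho> = inverse \<bar>ln (min \<rho> (1/10))\<bar>"

definition dini_modulus :: "(real \<Rightarrow> real) \<Rightarrow> bool" where
  "dini_modulus \<omega> \<longleftrightarrow> (\<forall>r\<ge>0. 0 \<le> \<omega> r) \<and> mono_on {0..} \<omega> \<and>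
     (\<omega> \<longlongrightarrow> 0) (at_right 0) \<and>
     set_integrable lborel {0<..<1} (\<lambda>r. \<omega> r / r)"

definition dini_loc :: "'a::metric_space set \<Rightarrow> ('a \<Rightarrow> real) \<Rightarrow> bool" where
  "dini_loc U u \<longleftrightarrow> (\<forall>x r. cball x r \<subseteq> U \<longrightarrow>
     (\<exists>\<omega>. dini_modulus \<omega> \<and>
        (\<forall>y\<in>cball x r. \<forall>z\<in>cball x r. \<bar>u y - u z\<bar> \<le> \<omega> (dist y z))))"

definition L_K :: "('a::euclidean_space \<Rightarrow> 'a \<Rightarrow> real) \<Rightarrow> ('a \<Rightarrow> real) \<Rightarrow> 'a \<Rightarrow> real" where
  "L_K K u x = set_lebesgue_integral lebesgue (ball x 1)
     (\<lambda>y. (u x - u y) / norm (y - x) ^ DIM('a) * K x (y - x))"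

definition ell_measure :: "'a::euclidean_space measure" where
  "ell_measure = density lebesgue (\<lambda>x. ennreal (ell (norm x) / norm x ^ DIM('a)))"

end

theory Submission
  imports Defs
begin


lemma polar:
  fixes h :: "real \<Rightarrow> ennreal" assumes hm[measurable]: "h \<in> borel_measurable borel"
  shows "(\<integral>\<^sup>+z. h (norm z) \<partial>(lborel::'a::euclidean_space measure)) =
    (\<integral>\<^sup>+t. ennreal (DIM('a) * unit_ball_vol DIM('a) * t^(DIM('a)-1)) * indicator {0..} t * h t \<partial>lborel)"
proof -
  let ?N = "DIM('a)" let ?c = "unit_ball_vol DIM('a)"
  define f where "f t = ennreal (?N * ?c * (-t)^(?N-1)) * indicator {..0} t" for t :: real
  have fm[measurable]: "f \<in> borel_measurable borel" unfolding f_def by measurable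
  have eq: "distr (lborel::'a measure) borel (\<lambda>z. - norm z) = density lborel f"
  proof (rule measure_eqI_lessThan)
    fix x :: real
    have s: "(\<lambda>z::'a. - norm z) -` {x<..} = ball 0 (-x)" by auto
    show "emeasure (distr (lborel::'a measure) borel (\<lambda>z. - norm z)) {x<..} < \<infinity>"
      using emeasure_bounded_finite[of "ball (0::'a) (-x)"] by (simp add: emeasure_distr s)
    show "emeasure (distr (lborel::'a measure) borel (\<lambda>z. - norm z)) {x<..} = emeasure (density lborel f) {x<..}"
    proof (cases "x < 0")
      case False
      have "emeasure (density lborel f) {x<..} = (\<integral>\<^sup>+t. f t * indicator {x<..} t \<partial>lborel)"
        by (simp add: emeasure_density)
      also have "\<dots> = 0" proof -
        have "(\<lambda>t. f t * indicator {x<..} t) = (\<lambda>_. 0)" using False by (auto simp: f_def indicator_def fun_eq_iff)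
        then show ?thesis by simp
      qed
      moreover have "emeasure lborel (ball (0::'a) (-x)) = 0" using False by (simp add: ball_empty)
      ultimately show ?thesis by (simp add: emeasure_distr s)
    next
      case True
      have "emeasure (density lborel f) {x<..} = (\<integral>\<^sup>+t. f t * indicator {x<..} t \<partial>lborel)"
        by (simp add: emeasure_density)
      also have "\<dots> = (\<integral>\<^sup>+t. ennreal (?N * ?c * (-t)^(?N-1)) * indicator {x..0} t \<partial>lborel)"
        using AE_lborel_singleton[of x]
        by (intro nn_integral_cong_AE) (auto simp: f_def indicator_def elim!: eventually_mono)
      also have "\<dots> = ennreal ((- ?c * (-0)^?N) - (- ?c * (-x)^?N))"
        using True
        by (intro nn_integral_FTC_Icc) (auto intro!: derivative_eq_intros simp: power_Suc[symmetric])
      also have "\<dots> = ennreal (?c * (-x)^?N)" by (simp add: zero_power DIM_positive)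
      finally show ?thesis using True by (simp add: emeasure_distr s emeasure_ball)
    qed
  qed simp_all
  have "(\<integral>\<^sup>+z. h (norm z) \<partial>(lborel::'a measure)) = (\<integral>\<^sup>+t. h (- t) \<partial>distr (lborel::'a measure) borel (\<lambda>z. - norm z))"
    by (subst nn_integral_distr) auto
  also have "\<dots> = (\<integral>\<^sup>+t. f t * h (- t) \<partial>lborel)"
    unfolding eq by (simp add: nn_integral_density)
  also have "\<dots> = ennreal \<bar>-1\<bar> * (\<integral>\<^sup>+t. f (0 + -1 * t) * h (- (0 + -1 * t)) \<partial>lborel)"
    by (rule nn_integral_real_affine) auto
  also have "\<dots> = (\<integral>\<^sup>+t. ennreal (DIM('a) * unit_ball_vol DIM('a) * t^(DIM('a)-1)) * indicator {0..} t * h t \<partial>lborel)"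
    by (auto simp: f_def indicator_def intro!: nn_integral_cong)
  finally show ?thesis .
qed
lemma translate_nn:
  fixes h :: "'a::euclidean_space \<Rightarrow> ennreal" assumes [measurable]: "h \<in> borel_measurable borel"
  shows "(\<integral>\<^sup>+y. h (y - a) \<partial>lborel) = (\<integral>\<^sup>+z. h z \<partial>lborel)"
proof -
  have "(\<integral>\<^sup>+y. h (y - a) \<partial>lborel) = (\<integral>\<^sup>+y. h (y - a) \<partial>distr lborel borel ((+) a))"
    by (simp add: lborel_distr_plus)
  also have "\<dots> = (\<integral>\<^sup>+z. h z \<partial>lborel)" by (subst nn_integral_distr) auto
  finally show ?thesis .
qed

lemma shell:
  fixes g :: "real \<Rightarrow> real" assumes [measurable]: "g \<in> borel_measurable borel" and a: "0 < a"
  shows "(\<integral>\<^sup>+z. ennreal (indicator {a..b} (norm z) * g (norm z) / norm z ^ DIM('a)) \<partial>(lborel::'a::euclidean_space measure))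
    = ennreal (DIM('a) * unit_ball_vol DIM('a)) * (\<integral>\<^sup>+t. ennreal (g t / t) * indicator {a..b} t \<partial>lborel)"
proof -
  let ?N = "DIM('a)" let ?s = "DIM('a) * unit_ball_vol DIM('a)"
  have "(\<integral>\<^sup>+z. ennreal (indicator {a..b} (norm z) * g (norm z) / norm z ^ DIM('a)) \<partial>(lborel::'a measure))
     = (\<integral>\<^sup>+t. ennreal (?s * t^(?N-1)) * indicator {0..} t * ennreal (indicator {a..b} t * g t / t ^ ?N) \<partial>lborel)"
    by (rule polar) measurable
  also have "\<dots> = (\<integral>\<^sup>+t. ennreal ?s * (ennreal (g t / t) * indicator {a..b} t) \<partial>lborel)"
  proof (intro nn_integral_cong)
    fix t :: real
    show "ennreal (?s * t^(?N-1)) * indicator {0..} t * ennreal (indicator {a..b} t * g t / t ^ ?N) =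
      ennreal ?s * (ennreal (g t / t) * indicator {a..b} t)"
    proof (cases "t \<in> {a..b}")
      case True
      then have t: "t > 0" using a by auto
      have e: "t^(?N-1) / t^?N = 1 / t" using t
        by (metis DIM_positive One_nat_def Suc_pred divide_divide_eq_left' nonzero_divide_mult_cancel_right order_less_irrefl power_Suc power_not_zero)
      have "?s * t^(?N-1) * (g t / t ^ ?N) = ?s * g t * (t^(?N-1) / t^?N)" by simp
      also have "\<dots> = ?s * (g t / t)" using e by simp
      finally have "?s * t^(?N-1) * (g t / t ^ ?N) = ?s * (g t / t)" .
      moreover have "0 \<le> ?s * t^(?N-1)" using t by simp
      moreover have "0 \<le> ?s" by simp
      ultimately show ?thesis using True t
        by (simp add: ennreal_mult'[symmetric] mult.assoc indicator_def)
    qed simp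
  qed
  also have "\<dots> = ennreal ?s * (\<integral>\<^sup>+t. ennreal (g t / t) * indicator {a..b} t \<partial>lborel)"
    by (rule nn_integral_cmult) measurable
  finally show ?thesis .
qed

lemma near_bound:
  fixes g :: "real \<Rightarrow> real" assumes [measurable]: "g \<in> borel_measurable borel" and g: "\<And>t. 0 \<le> g t"
  shows "(\<integral>\<^sup>+z. ennreal (indicator {..b} (norm z) * g (norm z) / norm z ^ (DIM('a) - 1)) \<partial>(lborel::'a::euclidean_space measure))
    \<le> ennreal (DIM('a) * unit_ball_vol DIM('a)) * (\<integral>\<^sup>+t. ennreal (g t) * indicator {0..b} t \<partial>lborel)"
proof -
  let ?N = "DIM('a)" let ?s = "DIM('a) * unit_ball_vol DIM('a)"
  have "(\<integral>\<^sup>+z. ennreal (indicator {..b} (norm z) * g (norm z) / norm z ^ (DIM('a) - 1)) \<partial>(lborel::'a measure))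
     = (\<integral>\<^sup>+t. ennreal (?s * t^(?N-1)) * indicator {0..} t * ennreal (indicator {..b} t * g t / t ^ (?N - 1)) \<partial>lborel)"
    by (rule polar) measurable
  also have "\<dots> \<le> (\<integral>\<^sup>+t. ennreal ?s * (ennreal (g t) * indicator {0..b} t) \<partial>lborel)"
  proof (intro nn_integral_mono)
    fix t :: real
    show "ennreal (?s * t^(?N-1)) * indicator {0..} t * ennreal (indicator {..b} t * g t / t ^ (?N - 1)) \<le>
      ennreal ?s * (ennreal (g t) * indicator {0..b} t)"
    proof (cases "t \<in> {0..b}")
      case True
      have le: "?s * t^(?N-1) * (g t / t ^ (?N-1)) \<le> ?s * g t"
      proof (cases "t^(?N-1) = 0")
        case True
        have "0 \<le> ?s * g t" using g[of t] by (intro mult_nonneg_nonneg) auto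
        moreover have "?s * t^(?N-1) * (g t / t ^ (?N-1)) = 0" using True by simp
        ultimately show ?thesis by linarith
      next
        case False
        then have "t^(?N-1) * (g t / t ^ (?N-1)) = g t" by simp
        then show ?thesis by (metis mult.assoc order_refl)
      qed
      have "ennreal (?s * t^(?N-1)) * ennreal (g t / t ^ (?N - 1)) = ennreal (?s * t^(?N-1) * (g t / t ^ (?N-1)))"
        using True by (intro ennreal_mult'[symmetric]) auto
      also have "\<dots> \<le> ennreal (?s * g t)" using le by (rule ennreal_leI)
      also have "\<dots> = ennreal ?s * ennreal (g t)" by (simp add: ennreal_mult')
      finally show ?thesis using True by (simp add: indicator_def)
    qed (auto simp: indicator_def)
  qed
  also have "\<dots> = ennreal ?s * (\<integral>\<^sup>+t. ennreal (g t) * indicator {0..b} t \<partial>lborel)"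
    by (rule nn_integral_cmult) measurable
  finally show ?thesis .
qed

lemma int_inv:
  assumes "0 < a" "a \<le> b" "0 \<le> c"
  shows "(\<integral>\<^sup>+t. ennreal (c / t) * indicator {a..b} t \<partial>lborel) = ennreal (c * ln b - c * ln a)"
  using assms by (intro nn_integral_FTC_Icc) (auto intro!: derivative_eq_intros simp: field_simps)

lemma int_p3:
  fixes \<rho> \<alpha> L :: real
  assumes r: "0 < \<rho>" "\<rho> < 1/10" and L: "L = - ln \<rho>" and a: "0 < \<alpha>" "\<alpha> < 1"
  shows "(\<integral>\<^sup>+t. ennreal (((- ln t) powr (-\<alpha>) - L powr (-\<alpha>)) / t) * indicator {\<rho>..1/10} t \<partial>lborel)
     \<le> ennreal (L powr (1-\<alpha>) / (1-\<alpha>) - L powr (-\<alpha>) * (L - ln 10))"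
proof -
  define F where "F t = - ((- ln t) powr (1-\<alpha>)) / (1-\<alpha>) - L powr (-\<alpha>) * ln t" for t
  have "(\<integral>\<^sup>+t. ennreal (((- ln t) powr (-\<alpha>) - L powr (-\<alpha>)) / t) * indicator {\<rho>..1/10} t \<partial>lborel)
     = ennreal (F (1/10) - F \<rho>)"
  proof (rule nn_integral_FTC_Icc)
    fix t assume t: "t \<in> {\<rho>..1/10}"
    then have t0: "0 < t" "t < 1" using r by auto
    then have lt: "0 < - ln t" by simp
    have d0: "DERIV (\<lambda>t. - ln t) t :> - (1/t)" using t0 by (auto intro!: derivative_eq_intros)
    have d1: "DERIV (\<lambda>t. (- ln t) powr (1-\<alpha>)) t :> (1-\<alpha>) * (- ln t) powr ((1-\<alpha>) - of_nat 1) * (- (1/t))"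
      by (rule DERIV_fun_powr[OF d0 lt])
    have d2: "DERIV (\<lambda>t. L powr (-\<alpha>) * ln t) t :> L powr (-\<alpha>) * (1/t)" using t0 by (auto intro!: derivative_eq_intros)
    have d3: "DERIV F t :> - ((1-\<alpha>) * (- ln t) powr ((1-\<alpha>) - of_nat 1) * (- (1/t))) / (1-\<alpha>) - L powr (-\<alpha>) * (1/t)"
      unfolding F_def by (intro DERIV_diff DERIV_cdivide DERIV_minus d1 d2)
    have "- ((1-\<alpha>) * (- ln t) powr ((1-\<alpha>) - of_nat 1) * (- (1/t))) / (1-\<alpha>) - L powr (-\<alpha>) * (1/t)
        = ((- ln t) powr (-\<alpha>) - L powr (-\<alpha>)) / t" using a t0 by (simp add: field_simps)
    with d3 show "DERIV F t :> ((- ln t) powr (-\<alpha>) - L powr (-\<alpha>)) / t" by simp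
    have "- ln t \<le> L" using t r L by auto
    then have "L powr (-\<alpha>) \<le> (- ln t) powr (-\<alpha>)" using lt a by (intro powr_mono2') auto
    then show "0 \<le> ((- ln t) powr (-\<alpha>) - L powr (-\<alpha>)) / t" using t0 by simp
  qed (use r in auto)
  also have "\<dots> \<le> ennreal (L powr (1-\<alpha>) / (1-\<alpha>) - L powr (-\<alpha>) * (L - ln 10))"
  proof (rule ennreal_leI)
    have "F (1/10) - F \<rho> = - ((ln 10) powr (1-\<alpha>)) / (1-\<alpha>) + L powr (1-\<alpha>) / (1-\<alpha>) - L powr (-\<alpha>) * (L - ln 10)"
      unfolding F_def L by (simp add: ln_div algebra_simps)
    moreover have "0 \<le> (ln 10) powr (1-\<alpha>) / (1-\<alpha>)" using a by simp
    ultimately show "F (1/10) - F \<rho> \<le> L powr (1-\<alpha>) / (1-\<alpha>) - L powr (-\<alpha>) * (L - ln 10)" by linarith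
  qed
  finally show ?thesis .
qed



lemma ell_nonneg: "0 \<le> ell t" by (simp add: ell_def)

lemma ell_small: "0 < t \<Longrightarrow> t \<le> 1/10 \<Longrightarrow> ell t = inverse (- ln t)"
  by (simp add: ell_def min_def)

lemma ell_large: assumes "1/10 \<le> t" shows "ell t = 1 / ln 10"
proof -
  have m: "min t (1/10) = 1/10" using assms by simp
  have l: "ln (1/10::real) = - ln 10" by (simp add: ln_div)
  have "ell t = inverse \<bar>ln (1/10::real)\<bar>" unfolding ell_def m ..
  also have "\<dots> = 1 / ln 10" unfolding l by (simp add: divide_inverse)
  finally show ?thesis .
qed

lemma ell_mono: assumes "0 \<le> s" "s \<le> t" shows "ell s \<le> ell t"
proof (cases "s = 0")
  case True then show ?thesis by (simp add: ell_def)
next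
  case False
  then have s: "0 < s" using assms by simp
  let ?a = "min s (1/10)" and ?b = "min t (1/10)"
  have ab: "0 < ?a" "?a \<le> ?b" "?b \<le> 1/10" using s assms by auto
  have b0: "0 < ?b" by (rule order_less_le_trans[OF ab(1) ab(2)])
  have b1: "?b < 1" using ab(3) by linarith
  have "ln ?a \<le> ln ?b" using ab(1,2) b0 by simp
  moreover have "ln ?b < 0" using b0 b1 by simp
  ultimately have "\<bar>ln ?b\<bar> \<le> \<bar>ln ?a\<bar>" "0 < \<bar>ln ?b\<bar>" by auto
  then show ?thesis unfolding ell_def by (simp add: le_imp_inverse_le)
qed

lemma dini_cont:
  assumes "dini_modulus \<omega>" "\<forall>y\<in>S. \<forall>z\<in>S. \<bar>u y - u z\<bar> \<le> \<omega> (dist y z)"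
  shows "continuous_on S u"
  unfolding continuous_on_iff
proof (intro ballI allI impI)
  fix x e assume x: "x \<in> S" and e: "(0::real) < e"
  have "(\<omega> \<longlongrightarrow> 0) (at_right 0)" using assms(1) by (simp add: dini_modulus_def)
  then have "eventually (\<lambda>t. dist (\<omega> t) 0 < e) (at_right 0)" using e by (simp add: tendsto_iff)
  then obtain b where b: "b > 0" "\<And>t. 0 < t \<Longrightarrow> t < b \<Longrightarrow> dist (\<omega> t) 0 < e"
    by (auto simp: eventually_at_right_field)
  show "\<exists>d>0. \<forall>x'\<in>S. dist x' x < d \<longrightarrow> dist (u x') (u x) < e"
  proof (intro exI[of _ b] conjI ballI impI)
    fix x' assume x': "x' \<in> S" "dist x' x < b"
    show "dist (u x') (u x) < e"
    proof (cases "x' = x")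
      case True then show ?thesis using e by simp
    next
      case False
      then have "0 < dist x' x" by simp
      then have "\<omega> (dist x' x) < e" using b(2)[of "dist x' x"] x' by (auto simp: dist_real_def)
      moreover have "\<bar>u x' - u x\<bar> \<le> \<omega> (dist x' x)" using assms(2) x x' by auto
      ultimately show ?thesis by (simp add: dist_real_def)
    qed
  qed (use b in auto)
qed

lemma int_leb:
  fixes p :: "'a::euclidean_space \<Rightarrow> real"
  assumes [measurable]: "p \<in> borel_measurable borel" and "\<And>x. 0 \<le> p x"
    and "(\<integral>\<^sup>+x. ennreal (p x) \<partial>lborel) < \<infinity>"
  shows "integrable lebesgue p"
proof -
  have "integrable lborel p" using assms by (intro integrableI_nonneg) auto
  then show ?thesis by (subst integrable_completion) auto
qed

lemma nn_leb:
  fixes p :: "'a::euclidean_space \<Rightarrow> ennreal"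
  assumes [measurable]: "p \<in> borel_measurable borel"
  shows "(\<integral>\<^sup>+x. p x \<partial>lebesgue) = (\<integral>\<^sup>+x. p x \<partial>lborel)"
  by (rule nn_integral_completion)

lemma K_meas:
  fixes K :: "'a::euclidean_space \<Rightarrow> 'a \<Rightarrow> real"
  assumes Km: "(\<lambda>(x, z). K x z) \<in> borel_measurable borel"
  shows "(\<lambda>y. K a (y - a)) \<in> borel_measurable borel"
proof -
  have Km': "(\<lambda>(x, z). K x z) \<in> borel_measurable (borel \<Otimes>\<^sub>M borel)" using Km by (simp add: borel_prod)
  have "(\<lambda>y::'a. (a, y - a)) \<in> borel \<rightarrow>\<^sub>M borel \<Otimes>\<^sub>M borel" by measurable
  from measurable_compose[OF this Km'] show ?thesis by simp
qed

lemma int_bound: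
  fixes p :: "'a::euclidean_space \<Rightarrow> real"
  assumes [measurable]: "p \<in> borel_measurable borel" and p0: "\<And>x. 0 \<le> p x"
    and le: "(\<integral>\<^sup>+x. ennreal (p x) \<partial>lborel) \<le> ennreal c" and c: "0 \<le> c"
  shows "integrable lebesgue p" "integral\<^sup>L lebesgue p \<le> c"
proof -
  have "(\<integral>\<^sup>+x. ennreal (p x) \<partial>lborel) < \<infinity>" using le by (simp add: le_less_trans)
  then show pi: "integrable lebesgue p" using int_leb[of p] p0 by simp
  have "ennreal (integral\<^sup>L lebesgue p) = (\<integral>\<^sup>+x. ennreal (p x) \<partial>lebesgue)"
    by (rule nn_integral_eq_integral[OF pi, symmetric]) (simp add: p0)
  also have "\<dots> = (\<integral>\<^sup>+x. ennreal (p x) \<partial>lborel)" by (rule nn_integral_completion)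
  finally have "ennreal (integral\<^sup>L lebesgue p) \<le> ennreal c" using le by simp
  then show "integral\<^sup>L lebesgue p \<le> c" using c by (simp add: ennreal_le_iff)
qed



lemma muA_lemma:
  fixes \<rho> :: real
  assumes rho: "0 < \<rho>" "\<rho> < 1/100" and L10: "10 \<le> - ln \<rho>"
  shows "ennreal (real DIM('b) * unit_ball_vol DIM('b) / 4) \<le> emeasure (ell_measure :: 'b::euclidean_space measure) (ball 0 \<rho> - ball 0 (3 * \<rho>^2))"
proof -
  define N where "N = DIM('b)"
  define \<sigma> where "\<sigma> = real DIM('b) * unit_ball_vol DIM('b)"
  define L where "L = - ln \<rho>"
  define A where "A = ball (0::'b) \<rho> - ball 0 (3 * \<rho>^2)"
  have sig: "0 < \<sigma>" unfolding \<sigma>_def by simp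
  have L10: "10 \<le> L" using L10 unfolding L_def .
  then have L4: "4 < L" by simp
  have rp: "0 < \<rho>^2" using rho by simp
  have rho2: "\<rho>^2 < \<rho> / 100" using rho by (simp add: power2_eq_square)
  have sh: "\<And>a b (G::real \<Rightarrow> real). G \<in> borel_measurable borel \<Longrightarrow> 0 < a \<Longrightarrow>
     (\<integral>\<^sup>+z. ennreal (indicator {a..b} (norm z) * G (norm z) / norm z ^ N) \<partial>(lborel::'b measure))
     = ennreal \<sigma> * (\<integral>\<^sup>+t. ennreal (G t / t) * indicator {a..b} t \<partial>lborel)"
    unfolding N_def \<sigma>_def by (rule shell)
  define dens where "dens y = ennreal (ell (norm y) / norm y ^ N)" for y :: 'b
  have densm[measurable]: "dens \<in> borel_measurable borel" unfolding dens_def ell_def by measurable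
  have densm': "dens \<in> borel_measurable lebesgue" by (rule measurable_completion) (use densm in simp)
  have mue: "emeasure ell_measure S = (\<integral>\<^sup>+y. dens y * indicator S y \<partial>lebesgue)" if "S \<in> sets lebesgue" for S
    unfolding ell_measure_def dens_def N_def using that densm'[unfolded dens_def N_def]
    by (subst emeasure_density) auto
  have Am: "A \<in> sets lebesgue" unfolding A_def by simp
  have "ennreal (\<sigma> / 4) \<le> emeasure ell_measure A"
  proof -
    define c where "c = 1 / (2 * L)"
    have c0: "0 \<le> c" unfolding c_def using L4 by simp
    have ab: "3 * \<rho>^2 \<le> \<rho> / 2" "0 < 3 * \<rho>^2" using rho2 rho(1) rp by linarith+
    have "ennreal (\<sigma> / 4) \<le> ennreal (\<sigma> * (c * ln (\<rho>/2) - c * ln (3 * \<rho>^2)))"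
    proof (rule ennreal_leI)
      have l1: "ln (\<rho>/2) = - L - ln 2" using rho unfolding L_def by (simp add: ln_div)
      have l2: "ln (3 * \<rho>^2) = ln 3 - 2 * L" using rho unfolding L_def by (simp add: ln_mult ln_realpow)
      have l6: "ln (6::real) = ln 2 + ln 3" using ln_mult[of 2 3] by simp
      have e: "c * ln (\<rho>/2) - c * ln (3 * \<rho>^2) = (L - ln 6) / (2 * L)"
        unfolding c_def l1 l2 l6 using L4 by (simp add: field_simps)
      have "ln 6 \<le> (5::real)" using ln_le_minus_one[of 6] by simp
      then have "1/4 \<le> (L - ln 6) / (2 * L)" using L10 by (simp add: field_simps)
      then show "\<sigma> / 4 \<le> \<sigma> * (c * ln (\<rho>/2) - c * ln (3 * \<rho>^2))" unfolding e using sig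
        by (metis divide_inverse mult_left_mono less_imp_le mult.commute inverse_eq_divide)
    qed
    also have "\<dots> = ennreal \<sigma> * (\<integral>\<^sup>+t. ennreal (c / t) * indicator {3 * \<rho>^2..\<rho>/2} t \<partial>lborel)"
      using ab c0 sig by (subst int_inv) (auto simp: ennreal_mult')
    also have "\<dots> = (\<integral>\<^sup>+y. ennreal (indicator {3 * \<rho>^2..\<rho>/2} (norm y) * c / norm y ^ N) \<partial>(lborel::'b measure))"
      using sh[of "\<lambda>_. c" "3 * \<rho>^2" "\<rho>/2"] ab by simp
    also have "\<dots> \<le> (\<integral>\<^sup>+y. dens y * indicator A y \<partial>lborel)"
    proof (intro nn_integral_mono)
      fix y :: 'b
      show "ennreal (indicator {3 * \<rho>^2..\<rho>/2} (norm y) * c / norm y ^ N) \<le> dens y * indicator A y"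
      proof (cases "norm y \<in> {3 * \<rho>^2..\<rho>/2}")
        case True
        then have y: "3 * \<rho>^2 \<le> norm y" "norm y \<le> \<rho>/2" by auto
        have yA: "y \<in> A" unfolding A_def using y rho by auto
        have ny: "0 < norm y" using y ab by linarith
        have "ln (3 * \<rho>^2) \<le> ln (norm y)" using y(1) ab(2) by (rule ln_mono)
        moreover have "ln (3 * \<rho>^2) = ln 3 + 2 * ln \<rho>" using rho by (simp add: ln_mult ln_realpow)
        moreover have "0 < ln (3::real)" by simp
        ultimately have "- ln (norm y) \<le> 2 * L" unfolding L_def by linarith
        moreover have "0 < - ln (norm y)" using y rho ny by simp
        ultimately have "inverse (2 * L) \<le> inverse (- ln (norm y))" by (rule le_imp_inverse_le)
        moreover have "ell (norm y) = inverse (- ln (norm y))" using y rho ny by (intro ell_small) auto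
        ultimately have "c \<le> ell (norm y)" unfolding c_def by (simp add: inverse_eq_divide)
        then have "c / norm y ^ N \<le> ell (norm y) / norm y ^ N" using ny by (simp add: divide_right_mono)
        then show ?thesis using True yA unfolding dens_def by (simp add: ennreal_leI)
      qed simp
    qed
    also have "\<dots> = emeasure ell_measure A" using mue[OF Am] by (simp add: nn_integral_completion A_def)
    finally show ?thesis .
  qed
  then show ?thesis unfolding \<sigma>_def A_def .
qed

lemma core:
  fixes K :: "'a::euclidean_space \<Rightarrow> 'a \<Rightarrow> real" and u :: "'a \<Rightarrow> real"
    and lam Lam \<alpha> \<delta> \<rho> :: real and x0 :: 'a
  assumes lam: "0 < lam" "lam \<le> Lam"
  and al: "0 < \<alpha>" "\<alpha> \<le> 1/8"
      "36 * \<alpha> * (Lam * (real DIM('a) * unit_ball_vol DIM('a)) * 5 ^ DIM('a))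
         \<le> (lam * (real DIM('b) * unit_ball_vol DIM('b)) / 2 ^ (DIM('a) + 5)) / 4"
  and rho: "0 < \<rho>" "\<rho> < 1/100"
      "30 * (Lam * (real DIM('a) * unit_ball_vol DIM('a)) * 5 ^ DIM('a))
         \<le> (lam * (real DIM('b) * unit_ball_vol DIM('b)) / 2 ^ (DIM('a) + 5)) / 4 * (- ln \<rho>) powr (1 - \<alpha>)"
  and de: "2 * \<delta> \<le> (lam * (real DIM('b) * unit_ball_vol DIM('b)) / 2 ^ (DIM('a) + 5)) / 4"
  and Km: "(\<lambda>(x, z). K x z) \<in> borel_measurable borel"
  and Kb: "\<forall>x\<in>ball 0 (2 * \<rho>^2). \<forall>z\<in>ball 0 1. lam \<le> K x z \<and> K x z \<le> Lam"
  and ui: "set_integrable lebesgue (ball 0 (1 + 2 * \<rho>^2)) u"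
  and ud: "dini_loc (ball 0 (2 * \<rho>^2)) u"
  and LK: "\<forall>x\<in>ball 0 (2 * \<rho>^2). L_K K u x \<ge> - \<delta> * ell (\<rho>^2) powr (\<alpha> - 1)"
  and ulow: "\<forall>x\<in>ball 0 (1 + 2 * \<rho>^2). u x \<ge> - max 0 (ell (norm x) powr \<alpha> - ell \<rho> powr \<alpha>)"
  and mu: "emeasure ell_measure ({x. u x \<ge> ell \<rho> powr \<alpha> / 2} \<inter> (ball 0 \<rho> - ball 0 (3 * \<rho>^2)))
        \<ge> ennreal (1/2) * emeasure (ell_measure :: 'b::euclidean_space measure) (ball 0 \<rho> - ball 0 (3 * \<rho>^2))"
  and rho10: "10 \<le> - ln \<rho>"
  and x0: "x0 \<in> ball 0 (\<rho>^2)" "u x0 < ell \<rho> powr \<alpha> - ell (\<rho>^2) powr \<alpha>"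
  shows False
proof -
  define N where "N = DIM('a)"
  define \<sigma> where "\<sigma> = real DIM('a) * unit_ball_vol DIM('a)"
  define A0 where "A0 = Lam * \<sigma> * 5 ^ N"
  define \<sigma>b where "\<sigma>b = real DIM('b) * unit_ball_vol DIM('b)"
  define B0 where "B0 = lam * \<sigma>b / 2 ^ (N + 5)"
  define L where "L = - ln \<rho>"
  have sig: "0 < \<sigma>" unfolding \<sigma>_def by simp
  have A0: "0 < A0" unfolding A0_def using lam sig by simp
  have sigb: "0 < \<sigma>b" unfolding \<sigma>b_def by simp
  have B0: "0 < B0" unfolding B0_def using lam sigb by simp
  have al3: "36 * \<alpha> * A0 \<le> B0 / 4" using al(3) unfolding A0_def B0_def \<sigma>_def \<sigma>b_def N_def .
  have rho3: "30 * A0 \<le> B0 / 4 * L powr (1 - \<alpha>)" using rho(3) unfolding A0_def B0_def \<sigma>_def \<sigma>b_def N_def L_def .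
  have de': "2 * \<delta> \<le> B0 / 4" using de unfolding B0_def \<sigma>b_def N_def .
  have "exp (4::real) = exp 1 ^ 4" by (metis exp_of_nat_mult mult.right_neutral of_nat_numeral)
  also have "\<dots> \<le> 3 ^ 4" by (rule power_mono[OF exp_le]) simp
  finally have "exp 4 < (100::real)" by simp
  then have "4 < ln (100::real)" by (metis exp_less_cancel_iff exp_ln zero_less_numeral)
  moreover have "ln (1/100) = - ln (100::real)" by (simp add: ln_div)
  moreover have "ln \<rho> < ln (1/100)" using rho by simp
  ultimately have L4: "4 < L" unfolding L_def by linarith
  have rho2: "\<rho>^2 < \<rho> / 100" using rho by (simp add: power2_eq_square)
  have ellr: "ell \<rho> = inverse L" unfolding L_def using rho by (simp add: ell_small)
  have "ln (\<rho>^2) = 2 * ln \<rho>" by (simp add: ln_realpow)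
  then have ellr2: "ell (\<rho>^2) = inverse (2 * L)" unfolding L_def using rho rho2
    by (subst ell_small) auto
  define P where "P = L powr (-\<alpha>)"
  have P0: "0 < P" unfolding P_def using L4 by simp
  have Pr: "ell \<rho> powr \<alpha> = P" unfolding ellr P_def by (simp add: inverse_powr powr_minus)
  have Pr2: "ell (\<rho>^2) powr \<alpha> = 2 powr (-\<alpha>) * P"
  proof -
    have h1: "ell (\<rho>^2) powr \<alpha> = inverse ((2*L) powr \<alpha>)" unfolding ellr2 by (rule inverse_powr)
    have h2: "(2*L) powr \<alpha> = 2 powr \<alpha> * L powr \<alpha>" using L4 by (simp add: powr_mult)
    show ?thesis unfolding P_def h1 h2 by (simp add: powr_minus)
  qed
  have Pr3: "ell (\<rho>^2) powr (\<alpha> - 1) = 2 powr (1-\<alpha>) * L powr (1 - \<alpha>)"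
  proof -
    have "ell (\<rho>^2) powr (\<alpha> - 1) = inverse ((2*L) powr (\<alpha> - 1))" unfolding ellr2 by (rule inverse_powr)
    also have "\<dots> = (2*L) powr (-(\<alpha> - 1))" by (simp only: powr_minus)
    also have "\<dots> = (2*L) powr (1 - \<alpha>)" by simp
    also have "\<dots> = 2 powr (1-\<alpha>) * L powr (1 - \<alpha>)" using L4 by (simp add: powr_mult)
    finally show ?thesis .
  qed
  define T where "T = P - 2 powr (-\<alpha>) * P"
  have e2: "1 - \<alpha> \<le> 2 powr (-\<alpha>)"
  proof -
    have "1 + (- \<alpha> * ln 2) \<le> exp (- \<alpha> * ln 2)" by (rule exp_ge_add_one_self)
    moreover have "ln 2 \<le> (1::real)" using ln_le_minus_one[of 2] by simp
    moreover have "2 powr (-\<alpha>) = exp (- \<alpha> * ln 2)" by (simp add: powr_def)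
    moreover have "\<alpha> * ln 2 \<le> \<alpha> * 1" using al(1) \<open>ln 2 \<le> 1\<close> by (intro mult_left_mono) auto
    ultimately show ?thesis by linarith
  qed
  have e3: "2 powr (-\<alpha>) < 1" using al by (simp add: powr_less_one)
  have T0: "0 < T" unfolding T_def using e3 P0 by simp
  have TP: "T \<le> \<alpha> * P"
  proof -
    have "P * (1 - \<alpha>) \<le> P * 2 powr (-\<alpha>)" using e2 P0 by (intro mult_left_mono) auto
    then show ?thesis unfolding T_def by (simp add: algebra_simps)
  qed
  have ux0: "u x0 < T" using x0(2) unfolding Pr Pr2 T_def .
  define R where "R = 19/10 * \<rho>^2"
  have rp: "0 < \<rho>^2" using rho by simp
  have Rsub: "cball 0 R \<subseteq> ball (0::'a) (2 * \<rho>^2)"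
  proof
    fix x :: 'a assume "x \<in> cball 0 R"
    then have "norm x \<le> 19/10 * \<rho>^2" unfolding R_def by simp
    then have "norm x < 2 * \<rho>^2" using rp by linarith
    then show "x \<in> ball 0 (2 * \<rho>^2)" by simp
  qed
  obtain \<omega> where om: "dini_modulus \<omega>" "\<forall>y\<in>cball 0 R. \<forall>z\<in>cball 0 R. \<bar>u y - u z\<bar> \<le> \<omega> (dist y z)"
    using ud Rsub unfolding dini_loc_def by blast
  have uc: "continuous_on (cball 0 R) u" by (rule dini_cont[OF om])
  have unn: "0 \<le> u y" if y: "norm y \<le> \<rho>" for y :: 'a
  proof -
    have "norm y < 1 + 2 * \<rho>^2" using y rho(2) rp by linarith
    then have "y \<in> ball 0 (1 + 2 * \<rho>^2)" by simp
    then have "u y \<ge> - max 0 (ell (norm y) powr \<alpha> - ell \<rho> powr \<alpha>)" using ulow by blast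
    moreover have "ell (norm y) powr \<alpha> \<le> ell \<rho> powr \<alpha>"
      using y al(1) by (intro powr_mono2 ell_mono ell_nonneg) auto
    ultimately show ?thesis by simp
  qed
  define w where "w y = u y + T * norm y ^ 2 / \<rho>^4" for y
  have wc: "continuous_on (cball 0 R) w" unfolding w_def
    using rho(1) by (intro continuous_on_add uc continuous_intros) auto
  have "cball (0::'a) R \<noteq> {}" unfolding R_def using rp by simp
  then obtain xb where xb: "xb \<in> cball 0 R" "\<And>y. y \<in> cball 0 R \<Longrightarrow> w xb \<le> w y"
    using continuous_attains_inf[OF compact_cball _ wc] by blast
  have nx0: "norm x0 < \<rho>^2" using x0(1) by simp
  have "norm x0 \<le> R" unfolding R_def using nx0 rp by linarith
  then have x0R: "x0 \<in> cball 0 R" by simp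
  have "norm x0 ^ 2 \<le> (\<rho>^2)^2" using x0(1) by (intro power_mono) auto
  then have "T * norm x0 ^ 2 / \<rho>^4 \<le> T" using T0 rp by (simp add: field_simps power_mult[symmetric] mult_left_mono)
  then have wx0: "w x0 < 2 * T" unfolding w_def using ux0 by simp
  have "norm xb \<le> R" using xb(1) by simp
  then have xbr: "norm xb \<le> \<rho>" using rho2 rho unfolding R_def by linarith
  have uxb0: "0 \<le> u xb" using unn[OF xbr] .
  have wxb: "w xb < 2 * T" using xb(2)[OF x0R] wx0 by simp
  have "0 \<le> T * norm xb ^ 2 / \<rho>^4" using T0 by simp
  then have uxb2: "u xb < 2 * T" using wxb unfolding w_def by simp
  have "T * norm xb ^ 2 / \<rho>^4 < 2 * T" using wxb uxb0 unfolding w_def by simp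
  then have "norm xb ^ 2 < 2 * \<rho>^4" using T0 rp by (simp add: field_simps)
  also have "\<dots> < (3/2 * \<rho>^2)^2"
  proof -
    have "(3/2 * \<rho>^2)^2 = 9/4 * \<rho>^4" by (simp add: power2_eq_square power4_eq_xxxx)
    moreover have "0 < \<rho>^4" using rho by simp
    ultimately show ?thesis by linarith
  qed
  finally have xbn: "norm xb < 3/2 * \<rho>^2" by (rule power_less_imp_less_base) (use rp in simp)
  have xbmin: "u xb - u y \<le> T * (norm y ^ 2 - norm xb ^ 2) / \<rho>^4" if "y \<in> cball 0 R" for y
    using xb(2)[OF that] unfolding w_def by (simp add: diff_divide_distrib right_diff_distrib)
  have "norm xb < 2 * \<rho>^2" using xbn rp by linarith
  then have xbB: "xb \<in> ball 0 (2 * \<rho>^2)" by simp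
  define B where "B = ball (0::'a) (1 + 2 * \<rho>^2)"
  have ballB: "ball xb 1 \<subseteq> B"
  proof
    fix y assume "y \<in> ball xb 1"
    then have "norm (y - xb) < 1" by (simp add: dist_norm norm_minus_commute)
    moreover have "norm y \<le> norm xb + norm (y - xb)" by (metis add.commute diff_add_cancel norm_triangle_ineq)
    ultimately have "norm y < 1 + 2 * \<rho>^2" using xbn rp by linarith
    then show "y \<in> B" unfolding B_def by simp
  qed
  define ub where "ub y = indicator B y * u y" for y
  have ubi: "integrable lebesgue ub" using ui unfolding set_integrable_def ub_def B_def by simp
  have ubm[measurable]: "ub \<in> borel_measurable lebesgue" using ubi by (rule borel_measurable_integrable)
  have Kxm: "(\<lambda>y. K xb (y - xb)) \<in> borel_measurable borel" by (rule K_meas[OF Km])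
  have Kxm'[measurable]: "(\<lambda>y. K xb (y - xb)) \<in> borel_measurable lebesgue"
    using Kxm by (intro measurable_completion) simp
  have Kxb: "lam \<le> K xb (y - xb) \<and> K xb (y - xb) \<le> Lam" if "y \<in> ball xb 1" for y
    using Kb xbB that by (auto simp: dist_norm norm_minus_commute)
  define F where "F y = (u xb - u y) / norm (y - xb) ^ N * K xb (y - xb)" for y
  define g where "g y = indicator (ball xb 1) y * F y" for y
  have LKg: "L_K K u xb = integral\<^sup>L lebesgue g"
    unfolding L_K_def set_lebesgue_integral_def g_def F_def N_def by simp
  have g_alt: "g = (\<lambda>y. indicator (ball xb 1) y * ((u xb - ub y) / norm (y - xb) ^ N * K xb (y - xb)))"
    using ballB unfolding g_def F_def ub_def by (auto simp: fun_eq_iff indicator_def)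
  have i1: "(\<lambda>y. indicator (ball xb 1) y :: real) \<in> borel_measurable lebesgue"
    by (intro measurable_completion borel_measurable_indicator) simp
  have i2: "(\<lambda>y. norm (y - xb) ^ N) \<in> borel_measurable lebesgue"
    by (intro measurable_completion) simp
  have gm[measurable]: "g \<in> borel_measurable lebesgue" unfolding g_alt
    by (intro borel_measurable_times borel_measurable_divide borel_measurable_diff i1 i2 ubm Kxm') simp
  have N1: "N = Suc (N - 1)" unfolding N_def using DIM_positive by simp
  have rN: "r ^ N = r * r ^ (N - 1)" for r :: real by (subst N1) simp
  have Lam0: "0 < Lam" using lam by simp
  have Kabs: "\<bar>K xb (y - xb)\<bar> \<le> Lam" "0 \<le> K xb (y - xb)" if "y \<in> ball xb 1" for y
    using Kxb[OF that] lam by auto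
  define r1 where "r1 = \<rho>^2 / 4"
  have r1: "0 < r1" "r1 < 1" unfolding r1_def using rp rho2 rho by auto
  have r1sub: "cball xb r1 \<subseteq> ball 0 (2 * \<rho>^2)"
  proof
    fix y assume "y \<in> cball xb r1"
    then have "norm (y - xb) \<le> r1" by (simp add: dist_norm norm_minus_commute)
    moreover have "norm y \<le> norm xb + norm (y - xb)" by (metis add.commute diff_add_cancel norm_triangle_ineq)
    ultimately have "norm y < 2 * \<rho>^2" using xbn rp unfolding r1_def by linarith
    then show "y \<in> ball 0 (2 * \<rho>^2)" by simp
  qed
  obtain \<omega>' where om': "dini_modulus \<omega>'" "\<forall>y\<in>cball xb r1. \<forall>z\<in>cball xb r1. \<bar>u y - u z\<bar> \<le> \<omega>' (dist y z)"
    using ud r1sub unfolding dini_loc_def by blast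
  define W where "W t = indicator {0<..<1} t * (\<omega>' t / t)" for t :: real
  have Wi: "integrable lborel W" using om'(1) unfolding dini_modulus_def set_integrable_def W_def by simp
  have Wm[measurable]: "W \<in> borel_measurable borel" using borel_measurable_integrable[OF Wi] by simp
  have om0: "0 \<le> \<omega>' t" if "0 \<le> t" for t using om'(1) that unfolding dini_modulus_def by auto
  have W0: "0 \<le> W t" for t unfolding W_def using om0[of t] by (auto simp: indicator_def)
  have Wfin: "(\<integral>\<^sup>+t. ennreal (W t) \<partial>lborel) < \<infinity>"
    using Wi W0 unfolding integrable_iff_bounded by simp
  have tr: "\<And>H::'a \<Rightarrow> ennreal. H \<in> borel_measurable borel \<Longrightarrow> (\<integral>\<^sup>+y. H (y - xb) \<partial>lborel) = (\<integral>\<^sup>+z. H z \<partial>lborel)"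
    by (rule translate_nn)
  define h1 where "h1 y = indicator {..r1} (norm (y - xb)) * (Lam * W (norm (y - xb))) / norm (y - xb) ^ (N - 1)" for y
  have h1m[measurable]: "h1 \<in> borel_measurable borel" unfolding h1_def by measurable
  have h10: "0 \<le> h1 y" for y unfolding h1_def using W0 Lam0 by simp
  have "(\<integral>\<^sup>+y. ennreal (h1 y) \<partial>lborel) = (\<integral>\<^sup>+z. ennreal (indicator {..r1} (norm z) * (Lam * W (norm z)) / norm z ^ (N - 1)) \<partial>(lborel::'a measure))"
    unfolding h1_def using tr[of "\<lambda>z. ennreal (indicator {..r1} (norm z) * (Lam * W (norm z)) / norm z ^ (N - 1))"] by simp
  also have "\<dots> \<le> ennreal \<sigma> * (\<integral>\<^sup>+t. ennreal (Lam * W t) * indicator {0..r1} t \<partial>lborel)"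
    unfolding N_def \<sigma>_def by (rule near_bound) (use W0 Lam0 in auto)
  also have "\<dots> \<le> ennreal \<sigma> * (\<integral>\<^sup>+t. ennreal Lam * ennreal (W t) \<partial>lborel)"
    by (intro mult_left_mono nn_integral_mono) (use Lam0 W0 in \<open>auto simp: indicator_def ennreal_mult[symmetric] less_imp_le\<close>)
  also have "\<dots> = ennreal \<sigma> * (ennreal Lam * (\<integral>\<^sup>+t. ennreal (W t) \<partial>lborel))"
    by (subst nn_integral_cmult) auto
  also have "\<dots> < \<infinity>" using Wfin by (simp add: ennreal_mult_less_top)
  finally have h1i: "integrable lebesgue h1" by (intro int_leb h1m h10)
  define h2 where "h2 y = Lam / r1^N * (indicator B y * \<bar>u xb\<bar> + \<bar>ub y\<bar>)" for y
  have "emeasure lborel B < \<infinity>" unfolding B_def by (rule emeasure_bounded_finite) simp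
  then have "integrable lebesgue (indicator B :: 'a \<Rightarrow> real)"
    unfolding B_def by (subst integrable_indicator_iff) (simp add: emeasure_completion)
  then have "integrable lebesgue (\<lambda>y. indicator B y * \<bar>u xb\<bar> + \<bar>ub y\<bar>)"
    by (intro Bochner_Integration.integrable_add integrable_mult_left integrable_abs ubi)
  then have h2i: "integrable lebesgue h2" unfolding h2_def
    by (rule integrable_mult_right)
  have h20: "0 \<le> h2 y" for y unfolding h2_def using Lam0 r1 by simp
  have gh: "\<bar>g y\<bar> \<le> h1 y + h2 y" for y
  proof (cases "y \<in> ball xb 1")
    case False then show ?thesis unfolding g_def using h10[of y] h20[of y] by simp
  next
    case True
    define r where "r = norm (y - xb)"
    have yB: "y \<in> B" using ballB True by auto
    have r1': "r < 1" using True unfolding r_def by (simp add: dist_norm norm_minus_commute)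
    have gy: "\<bar>g y\<bar> = \<bar>u xb - u y\<bar> / r ^ N * K xb (y - xb)"
      using True Kabs[OF True] unfolding g_def F_def r_def by (simp add: abs_mult)
    show ?thesis
    proof (cases "r = 0")
      case True
      have "r ^ N = 0" using True N1 by (metis power_0_Suc)
      then have "\<bar>g y\<bar> = 0" using gy by simp
      then show ?thesis using h10[of y] h20[of y] by simp
    next
      case False
      then have rp0: "0 < r" unfolding r_def by simp
      show ?thesis
      proof (cases "r \<le> r1")
        case True
        have "y \<in> cball xb r1" "xb \<in> cball xb r1" using True r1 unfolding r_def by (auto simp: dist_norm norm_minus_commute)
        then have "\<bar>u xb - u y\<bar> \<le> \<omega>' (dist xb y)" using om'(2) by blast
        then have uo: "\<bar>u xb - u y\<bar> \<le> \<omega>' r" unfolding r_def by (simp add: dist_norm norm_minus_commute)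
        have "\<bar>g y\<bar> \<le> \<omega>' r / r ^ N * Lam" unfolding gy
          using uo Kabs[OF \<open>y \<in> ball xb 1\<close>] rp0
          by (intro mult_mono divide_right_mono) auto
        also have "\<dots> = h1 y" unfolding h1_def r_def[symmetric] W_def using True rp0 r1' rN[of r]
          by (simp add: indicator_def field_simps)
        finally show ?thesis using h20[of y] by simp
      next
        case False
        have "\<bar>u xb - u y\<bar> \<le> \<bar>u xb\<bar> + \<bar>u y\<bar>" by simp
        have "\<bar>g y\<bar> \<le> (\<bar>u xb\<bar> + \<bar>u y\<bar>) / r1 ^ N * Lam" unfolding gy
          using Kabs[OF \<open>y \<in> ball xb 1\<close>] rp0 False r1
          by (intro mult_mono frac_le power_mono) auto
        also have "\<dots> = h2 y" unfolding h2_def ub_def using yB by (simp add: field_simps)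
        finally show ?thesis using h10[of y] by simp
      qed
    qed
  qed
  have gi: "integrable lebesgue g"
  proof (rule Bochner_Integration.integrable_bound[OF Bochner_Integration.integrable_add[OF h1i h2i] gm])
    show "AE y in lebesgue. norm (g y) \<le> norm (h1 y + h2 y)"
    proof (intro AE_I2)
      fix y show "norm (g y) \<le> norm (h1 y + h2 y)" using gh[of y] h10[of y] h20[of y] by simp
    qed
  qed
  have sh: "\<And>a b (G::real \<Rightarrow> real). G \<in> borel_measurable borel \<Longrightarrow> 0 < a \<Longrightarrow>
     (\<integral>\<^sup>+z. ennreal (indicator {a..b} (norm z) * G (norm z) / norm z ^ N) \<partial>(lborel::'a measure))
     = ennreal \<sigma> * (\<integral>\<^sup>+t. ennreal (G t / t) * indicator {a..b} t \<partial>lborel)"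
    unfolding N_def \<sigma>_def by (rule shell)
  have R0: "0 < R" unfolding R_def using rp by simp
  have R2: "R \<le> 2" unfolding R_def using rho2 rho by simp
  define C1 where "C1 = 4 * Lam * T / \<rho>^2"
  define p1 where "p1 y = indicator {..4 * \<rho>^2} (norm (y - xb)) * C1 / norm (y - xb) ^ (N - 1)" for y
  have C10: "0 \<le> C1" unfolding C1_def using Lam0 T0 by simp
  have p1m[measurable]: "p1 \<in> borel_measurable borel" unfolding p1_def by measurable
  have p10: "0 \<le> p1 y" for y unfolding p1_def using C10 by simp
  have "(\<integral>\<^sup>+y. ennreal (p1 y) \<partial>lborel) = (\<integral>\<^sup>+z. ennreal (indicator {..4 * \<rho>^2} (norm z) * C1 / norm z ^ (N - 1)) \<partial>(lborel::'a measure))"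
    unfolding p1_def using tr[of "\<lambda>z. ennreal (indicator {..4 * \<rho>^2} (norm z) * C1 / norm z ^ (N - 1))"] by simp
  also have "\<dots> \<le> ennreal \<sigma> * (\<integral>\<^sup>+t. ennreal C1 * indicator {0..4 * \<rho>^2} t \<partial>lborel)"
    unfolding N_def \<sigma>_def by (rule near_bound) (use C10 in auto)
  also have "\<dots> = ennreal (\<sigma> * (C1 * (4 * \<rho>^2)))"
    using C10 rp sig by (simp add: nn_integral_cmult_indicator ennreal_mult)
  finally have p1b: "integrable lebesgue p1" "integral\<^sup>L lebesgue p1 \<le> \<sigma> * (C1 * (4 * \<rho>^2))"
    using int_bound[OF p1m p10] C10 sig rp by auto
  define C2 where "C2 = 2 * T * Lam * 5 ^ N"
  have C20: "0 \<le> C2" unfolding C2_def using Lam0 T0 by simp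
  define p2 where "p2 y = indicator {R..2} (norm y) * C2 / norm y ^ N" for y :: 'a
  have p2m[measurable]: "p2 \<in> borel_measurable borel" unfolding p2_def by measurable
  have p20: "0 \<le> p2 y" for y unfolding p2_def using C20 by simp
  have "(\<integral>\<^sup>+y. ennreal (p2 y) \<partial>lborel) = ennreal \<sigma> * (\<integral>\<^sup>+t. ennreal (C2 / t) * indicator {R..2} t \<partial>lborel)"
    unfolding p2_def using sh[of "\<lambda>_. C2" R 2] R0 by simp
  also have "\<dots> = ennreal \<sigma> * ennreal (C2 * ln 2 - C2 * ln R)"
    using R0 R2 C20 by (subst int_inv) auto
  also have "\<dots> = ennreal (\<sigma> * (C2 * ln 2 - C2 * ln R))"
    using sig by (simp add: ennreal_mult')
  finally have "(\<integral>\<^sup>+y. ennreal (p2 y) \<partial>lborel) \<le> ennreal (\<sigma> * (C2 * ln 2 - C2 * ln R))" by simp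
  moreover have "0 \<le> \<sigma> * (C2 * ln 2 - C2 * ln R)"
    using R0 R2 C20 sig by (intro mult_nonneg_nonneg) (auto simp: algebra_simps intro!: mult_left_mono)
  ultimately have p2b: "integrable lebesgue p2" "integral\<^sup>L lebesgue p2 \<le> \<sigma> * (C2 * ln 2 - C2 * ln R)"
    using int_bound[OF p2m p20] by auto
  define C3 where "C3 = Lam * 5 ^ N"
  have C30: "0 \<le> C3" unfolding C3_def using Lam0 by simp
  define E0 where "E0 t = (- ln t) powr (-\<alpha>) - L powr (-\<alpha>)" for t
  have E00: "0 \<le> E0 t" if "\<rho> \<le> t" "t \<le> 1/10" for t
  proof -
    have "- ln t \<le> L" using that rho unfolding L_def by simp
    moreover have "0 < - ln t" using that rho by simp
    ultimately show ?thesis unfolding E0_def using al by (simp add: powr_mono2')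
  qed
  define p3 where "p3 y = indicator {\<rho>..1/10} (norm y) * (C3 * E0 (norm y)) / norm y ^ N" for y :: 'a
  have p3m[measurable]: "p3 \<in> borel_measurable borel" unfolding p3_def E0_def by measurable
  have p30: "0 \<le> p3 y" for y unfolding p3_def using C30 E00[of "norm y"] by (simp add: indicator_def)
  define I3 where "I3 = L powr (1-\<alpha>) / (1-\<alpha>) - L powr (-\<alpha>) * (L - ln 10)"
  have "(\<integral>\<^sup>+y. ennreal (p3 y) \<partial>lborel) = ennreal \<sigma> * (\<integral>\<^sup>+t. ennreal (C3 * E0 t / t) * indicator {\<rho>..1/10} t \<partial>lborel)"
    unfolding p3_def using sh[of "\<lambda>t. C3 * E0 t" \<rho> "1/10"] rho by (simp add: E0_def)
  also have "\<dots> = ennreal \<sigma> * (ennreal C3 * (\<integral>\<^sup>+t. ennreal (E0 t / t) * indicator {\<rho>..1/10} t \<partial>lborel))"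
  proof -
    have "\<And>t. ennreal (C3 * E0 t / t) * indicator {\<rho>..1/10} t = ennreal C3 * (ennreal (E0 t / t) * indicator {\<rho>..1/10} t)"
    proof -
      fix t
      have "ennreal (C3 * E0 t / t) = ennreal (C3 * (E0 t / t))" by simp
      also have "\<dots> = ennreal C3 * ennreal (E0 t / t)" using C30 by (rule ennreal_mult')
      finally show "ennreal (C3 * E0 t / t) * indicator {\<rho>..1/10} t = ennreal C3 * (ennreal (E0 t / t) * indicator {\<rho>..1/10} t)"
        by (simp add: mult.assoc)
    qed
    then have "(\<integral>\<^sup>+t. ennreal (C3 * E0 t / t) * indicator {\<rho>..1/10} t \<partial>lborel) = (\<integral>\<^sup>+t. ennreal C3 * (ennreal (E0 t / t) * indicator {\<rho>..1/10} t) \<partial>lborel)"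
      by simp
    also have "\<dots> = ennreal C3 * (\<integral>\<^sup>+t. ennreal (E0 t / t) * indicator {\<rho>..1/10} t \<partial>lborel)"
      by (rule nn_integral_cmult) (simp add: E0_def)
    finally show ?thesis by simp
  qed
  also have "\<dots> \<le> ennreal \<sigma> * (ennreal C3 * ennreal I3)"
    unfolding E0_def I3_def
    by (intro mult_left_mono int_p3[OF rho(1) _ L_def al(1)]) (use rho al in auto)
  also have "\<dots> = ennreal (\<sigma> * (C3 * I3))"
    using sig C30 by (simp add: ennreal_mult')
  finally have p3l: "(\<integral>\<^sup>+y. ennreal (p3 y) \<partial>lborel) \<le> ennreal (\<sigma> * (C3 * I3))" .
  have Lp: "L powr (1-\<alpha>) = L * P"
  proof -
    have "L powr (1-\<alpha>) = L powr (1 + (-\<alpha>))" by simp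
    also have "\<dots> = L powr 1 * L powr (-\<alpha>)" by (rule powr_add)
    also have "L powr 1 = L" using L4 by simp
    finally show ?thesis unfolding P_def .
  qed
  have I3e: "I3 = P * (L / (1-\<alpha>) - L + ln 10)" unfolding I3_def Lp P_def using al by (simp add: field_simps)
  have "L \<le> L / (1-\<alpha>)" using al L4 by (simp add: field_simps)
  then have "0 \<le> I3" unfolding I3e using P0 by simp
  then have p3b: "integrable lebesgue p3" "integral\<^sup>L lebesgue p3 \<le> \<sigma> * (C3 * I3)"
    using int_bound[OF p3m p30 p3l] C30 sig by auto
  define p4 where "p4 y = indicator {1/10..2} (norm y) * C3 / norm y ^ N" for y :: 'a
  have p4m[measurable]: "p4 \<in> borel_measurable borel" unfolding p4_def by measurable
  have p40: "0 \<le> p4 y" for y unfolding p4_def using C30 by simp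
  have "(\<integral>\<^sup>+y. ennreal (p4 y) \<partial>lborel) = ennreal \<sigma> * (\<integral>\<^sup>+t. ennreal (C3 / t) * indicator {1/10..2} t \<partial>lborel)"
    unfolding p4_def using sh[of "\<lambda>_. C3" "1/10" 2] by simp
  also have "\<dots> = ennreal \<sigma> * ennreal (C3 * ln 2 - C3 * ln (1/10))"
    using C30 by (subst int_inv) auto
  also have "\<dots> = ennreal (\<sigma> * (C3 * ln 2 - C3 * ln (1/10)))"
    using sig by (simp add: ennreal_mult')
  finally have "(\<integral>\<^sup>+y. ennreal (p4 y) \<partial>lborel) \<le> ennreal (\<sigma> * (C3 * ln 2 - C3 * ln (1/10)))" by simp
  moreover have "0 \<le> \<sigma> * (C3 * ln 2 - C3 * ln (1/10))"
    using C30 sig by (intro mult_nonneg_nonneg) (auto simp: algebra_simps ln_div intro!: mult_left_mono)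
  ultimately have p4b: "integrable lebesgue p4" "integral\<^sup>L lebesgue p4 \<le> \<sigma> * (C3 * ln 2 - C3 * ln (1/10))"
    using int_bound[OF p4m p40] by auto
  have L10: "10 \<le> L" using rho10 unfolding L_def .
  define A where "A = ball (0::'a) \<rho> - ball 0 (3 * \<rho>^2)"
  define G where "G = {x. u x \<ge> ell \<rho> powr \<alpha> / 2} \<inter> A"
  have AB: "A \<subseteq> B"
  proof
    fix x assume "x \<in> A"
    then have "norm x < \<rho>" unfolding A_def by simp
    then have "norm x < 1 + 2 * \<rho>^2" using rho(2) rp by linarith
    then show "x \<in> B" unfolding B_def by simp
  qed
  have Gm: "G \<in> sets lebesgue"
  proof -
    have "G = {x \<in> space lebesgue. P / 2 \<le> ub x} \<inter> A" unfolding G_def ub_def Pr using AB by (auto simp: indicator_def)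
    moreover have "A \<in> sets lebesgue" unfolding A_def by simp
    ultimately show ?thesis by (simp add: sets.Int)
  qed
  define dens where "dens y = ennreal (ell (norm y) / norm y ^ N)" for y :: 'a
  have densm[measurable]: "dens \<in> borel_measurable borel" unfolding dens_def ell_def by measurable
  have densm': "dens \<in> borel_measurable lebesgue" by (rule measurable_completion) (use densm in simp)
  have mue: "emeasure ell_measure S = (\<integral>\<^sup>+y. dens y * indicator S y \<partial>lebesgue)" if "S \<in> sets lebesgue" for S
    unfolding ell_measure_def dens_def N_def using that densm'[unfolded dens_def N_def]
    by (subst emeasure_density) auto
  have Am: "A \<in> sets lebesgue" unfolding A_def by simp
  have muA: "ennreal (\<sigma>b / 4) \<le> emeasure (ell_measure :: 'b measure) (ball 0 \<rho> - ball 0 (3 * \<rho>^2))"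
    unfolding \<sigma>b_def using rho(1,2) rho10 by (rule muA_lemma)
  have muG: "ennreal (\<sigma>b / 8) \<le> emeasure ell_measure G"
  proof -
    have "ennreal (1/2) * ennreal (\<sigma>b / 4) = ennreal (1/2 * (\<sigma>b / 4))" by (rule ennreal_mult'[symmetric]) simp
    then have "ennreal (\<sigma>b / 8) = ennreal (1/2) * ennreal (\<sigma>b / 4)" by simp
    also have "\<dots> \<le> ennreal (1/2) * emeasure (ell_measure :: 'b measure) (ball 0 \<rho> - ball 0 (3 * \<rho>^2))" using muA by (rule mult_left_mono) simp
    also have "\<dots> \<le> emeasure ell_measure G" using mu unfolding G_def A_def by simp
    finally show ?thesis .
  qed
  define C4 where "C4 = lam * P / 2 ^ (N + 2)"
  have C40: "0 \<le> C4" unfolding C4_def using lam P0 by simp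
  define q where "q y = C4 * indicator G y / norm y ^ N" for y :: 'a
  have q0: "0 \<le> q y" for y unfolding q_def using C40 by simp
  have Gsub: "G \<subseteq> A" unfolding G_def by auto
  have qm: "q \<in> borel_measurable lebesgue"
  proof -
    have "(\<lambda>y::'a. norm y ^ N) \<in> borel_measurable lebesgue" by (intro measurable_completion) simp
    then show ?thesis unfolding q_def using Gm
      by (intro borel_measurable_divide borel_measurable_times borel_measurable_const borel_measurable_indicator) auto
  qed
  have qi: "integrable lebesgue q"
  proof (rule Bochner_Integration.integrable_bound[OF _ qm])
    have "emeasure lborel (ball (0::'a) \<rho>) < \<infinity>" by (rule emeasure_bounded_finite) simp
    then have "integrable lebesgue (indicator (ball (0::'a) \<rho>) :: 'a \<Rightarrow> real)"
      by (subst integrable_indicator_iff) (simp add: emeasure_completion)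
    then show "integrable lebesgue (\<lambda>y. C4 / (3 * \<rho>^2) ^ N * indicator (ball (0::'a) \<rho>) y)"
      by (rule integrable_mult_right)
    show "AE y in lebesgue. norm (q y) \<le> norm (C4 / (3 * \<rho>^2) ^ N * indicator (ball (0::'a) \<rho>) y)"
    proof (intro AE_I2)
      fix y :: 'a
      show "norm (q y) \<le> norm (C4 / (3 * \<rho>^2) ^ N * indicator (ball (0::'a) \<rho>) y)"
      proof (cases "y \<in> G")
        case True
        then have y: "3 * \<rho>^2 \<le> norm y" "norm y < \<rho>" using Gsub unfolding A_def by auto
        have "(3 * \<rho>^2) ^ N \<le> norm y ^ N" using y rp by (intro power_mono) auto
        moreover have "0 < (3 * \<rho>^2) ^ N" using rp by simp
        moreover have "0 < norm y" using y rp by linarith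
        then have "0 < norm y ^ N" by simp
        ultimately have "C4 / norm y ^ N \<le> C4 / (3 * \<rho>^2) ^ N" using C40 by (intro divide_left_mono mult_pos_pos) auto
        then show ?thesis using True y q0[of y] C40 unfolding q_def by simp
      qed (simp add: q_def)
    qed
  qed
  have qlow: "C4 * L * (\<sigma>b / 8) \<le> integral\<^sup>L lebesgue q"
  proof -
    have "ennreal (C4 * L * (\<sigma>b / 8)) = ennreal (C4 * L) * ennreal (\<sigma>b / 8)"
      using C40 L4 by (simp add: ennreal_mult'[symmetric])
    also have "\<dots> \<le> ennreal (C4 * L) * emeasure ell_measure G" using muG by (rule mult_left_mono) simp
    also have "\<dots> = ennreal (C4 * L) * (\<integral>\<^sup>+y. dens y * indicator G y \<partial>lebesgue)" using mue[OF Gm] by simp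
    also have "\<dots> = (\<integral>\<^sup>+y. ennreal (C4 * L) * (dens y * indicator G y) \<partial>lebesgue)"
      by (rule nn_integral_cmult[symmetric]) (use densm' Gm in simp)
    also have "\<dots> \<le> (\<integral>\<^sup>+y. ennreal (q y) \<partial>lebesgue)"
    proof (intro nn_integral_mono)
      fix y :: 'a
      show "ennreal (C4 * L) * (dens y * indicator G y) \<le> ennreal (q y)"
      proof (cases "y \<in> G")
        case True
        then have y: "3 * \<rho>^2 \<le> norm y" "norm y < \<rho>" using Gsub unfolding A_def by auto
        then have ny: "0 < norm y" using rp by linarith
        have "ell (norm y) \<le> ell \<rho>" using y ny by (intro ell_mono) auto
        then have "L * ell (norm y) \<le> 1" unfolding ellr using L4 by (simp add: field_simps)
        then have "C4 * (L * ell (norm y)) \<le> C4 * 1" using C40 by (rule mult_left_mono)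
        then have "C4 * (L * ell (norm y)) / norm y ^ N \<le> C4 / norm y ^ N" by (intro divide_right_mono) simp_all
        then have "C4 * L * (ell (norm y) / norm y ^ N) \<le> C4 / norm y ^ N" by (metis mult.assoc times_divide_eq_right)
        then show ?thesis using True C40 L4 unfolding dens_def q_def
          by (simp add: ennreal_mult'[symmetric] ennreal_leI)
      qed (simp add: q_def)
    qed
    also have "\<dots> = ennreal (integral\<^sup>L lebesgue q)" using qi q0 by (intro nn_integral_eq_integral) auto
    finally show ?thesis using integral_nonneg_AE[of q] q0 by (simp add: ennreal_le_iff)
  qed
  have gle: "g y \<le> D / norm (y - xb) ^ N * Lam"
    if y: "y \<in> ball xb 1" and d: "u xb - u y \<le> D" "0 \<le> D" and r: "0 < norm (y - xb)" for y D
  proof -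
    have gy: "g y = (u xb - u y) / norm (y - xb) ^ N * K xb (y - xb)" using y unfolding g_def F_def by simp
    have K: "K xb (y - xb) \<le> Lam" "0 \<le> K xb (y - xb)" using Kabs[OF y] by auto
    show ?thesis
    proof (cases "0 \<le> u xb - u y")
      case True
      then show ?thesis unfolding gy using d K r by (intro mult_mono divide_right_mono) auto
    next
      case False
      then have "(u xb - u y) / norm (y - xb) ^ N * K xb (y - xb) \<le> 0" using K r
        by (intro mult_nonpos_nonneg) (auto simp: divide_nonpos_pos)
      moreover have "0 \<le> D / norm (y - xb) ^ N * Lam" using d Lam0 by simp
      ultimately show ?thesis unfolding gy by linarith
    qed
  qed
  have rlow: "norm y / 5 \<le> norm (y - xb)" if "R < norm y" for y
  proof -
    have "norm y \<le> norm xb + norm (y - xb)" by (metis add.commute diff_add_cancel norm_triangle_ineq)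
    then show ?thesis using that xbn norm_ge_zero[of y] unfolding R_def by linarith
  qed
  have gbig: "g y \<le> D * (Lam * 5 ^ N) / norm y ^ N"
    if y: "y \<in> ball xb 1" "R < norm y" and d: "u xb - u y \<le> D" "0 \<le> D" for y D
  proof -
    have ny: "0 < norm y" using y R0 by linarith
    have r: "0 < norm (y - xb)" using rlow[OF y(2)] ny by linarith
    have "(norm y / 5) ^ N \<le> norm (y - xb) ^ N" using rlow[OF y(2)] ny by (intro power_mono) auto
    moreover have "0 < (norm y / 5) ^ N" "0 < norm (y - xb) ^ N" using ny r by simp_all
    ultimately have "D / norm (y - xb) ^ N \<le> D / (norm y / 5) ^ N" using d by (intro divide_left_mono mult_pos_pos) auto
    also have "\<dots> = D * 5 ^ N / norm y ^ N" by (simp add: power_divide)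
    finally have "D / norm (y - xb) ^ N * Lam \<le> D * 5 ^ N / norm y ^ N * Lam" using Lam0 by (intro mult_right_mono) auto
    then show ?thesis using gle[OF y(1) d r] by (simp add: field_simps)
  qed
  have Gball: "G \<subseteq> ball xb 1"
  proof
    fix y assume "y \<in> G"
    then have "norm y < \<rho>" using Gsub unfolding A_def by auto
    moreover have "norm (y - xb) \<le> norm y + norm xb" by (rule norm_triangle_ineq4)
    ultimately have "norm (y - xb) < 1" using xbn rho rp rho2 by linarith
    then show "y \<in> ball xb 1" by (simp add: dist_norm norm_minus_commute)
  qed
  have GR: "R < norm y" if "y \<in> G" for y
  proof -
    have "3 * \<rho>^2 \<le> norm y" using that Gsub unfolding A_def by auto
    then show ?thesis unfolding R_def using rp by linarith
  qed
  have "\<alpha> * P \<le> 1/8 * P" using al P0 by (intro mult_right_mono) auto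
  then have TP4: "2 * T \<le> P / 4" using TP by linarith
  have psum0: "0 \<le> p1 y + p2 y + p3 y + p4 y" for y using p10[of y] p20[of y] p30[of y] p40[of y] by simp
  have gP: "g y \<le> p1 y + p2 y + p3 y + p4 y - q y" for y
  proof (cases "y \<in> ball xb 1")
    case False
    then have "y \<notin> G" using Gball by auto
    then show ?thesis using False psum0[of y] unfolding g_def q_def by simp
  next
    case yb: True
    define r where "r = norm (y - xb)"
    have yB: "y \<in> B" using ballB yb by auto
    show ?thesis
    proof (cases "norm y \<le> R")
      case True
      then have yG: "y \<notin> G" using GR by force
      then have q: "q y = 0" unfolding q_def by simp
      show ?thesis
      proof (cases "r = 0")
        case True
        have "r ^ N = 0" using True N1 by (metis power_0_Suc)
        then have "g y = 0" unfolding g_def F_def r_def by simp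
        then show ?thesis using q psum0[of y] by simp
      next
        case False
        then have r0: "0 < r" unfolding r_def by simp
        have yR: "y \<in> cball 0 R" using True by simp
        have "norm y \<le> norm xb + r" unfolding r_def by (metis add.commute diff_add_cancel norm_triangle_ineq)
        have "norm xb \<le> norm y + r" unfolding r_def by (metis diff_add_cancel norm_triangle_ineq4 norm_minus_commute add.commute norm_triangle_ineq)
        have sq: "norm y ^ 2 - norm xb ^ 2 \<le> r * (7/2 * \<rho>^2)"
        proof (cases "norm xb \<le> norm y")
          case True
          have "norm y ^ 2 - norm xb ^ 2 = (norm y - norm xb) * (norm y + norm xb)" by (simp add: power2_eq_square algebra_simps)
          also have "\<dots> \<le> r * (7/2 * \<rho>^2)"
            using True \<open>norm y \<le> norm xb + r\<close> \<open>norm y \<le> R\<close> xbn r0 unfolding R_def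
            by (intro mult_mono) auto
          finally show ?thesis .
        next
          case False
          then have "norm y ^ 2 \<le> norm xb ^ 2" by (intro power_mono) auto
          moreover have "0 \<le> r * (7/2 * \<rho>^2)" using r0 rp by simp
          ultimately show ?thesis by linarith
        qed
        have "u xb - u y \<le> T * (norm y ^ 2 - norm xb ^ 2) / \<rho>^4" by (rule xbmin[OF yR])
        also have "\<dots> \<le> T * (r * (7/2 * \<rho>^2)) / \<rho>^4" using sq T0 rp by (intro divide_right_mono mult_left_mono) auto
        also have "\<dots> \<le> 4 * T * r / \<rho>^2" using T0 r0 rp by (simp add: field_simps power4_eq_xxxx power2_eq_square)
        finally have d: "u xb - u y \<le> 4 * T * r / \<rho>^2" .
        have "g y \<le> 4 * T * r / \<rho>^2 / r ^ N * Lam" unfolding r_def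
          using gle[OF yb d[unfolded r_def]] T0 r0 rp unfolding r_def by simp
        also have "\<dots> = C1 / r ^ (N - 1)" unfolding C1_def using r0 rN[of r] by (simp add: field_simps)
        also have "\<dots> = p1 y"
        proof -
          have "r \<le> norm y + norm xb" unfolding r_def by (rule norm_triangle_ineq4)
          then have "r \<le> 4 * \<rho>^2" using True xbn rp unfolding R_def by linarith
          then show ?thesis unfolding p1_def r_def by simp
        qed
        finally show ?thesis using q p20[of y] p30[of y] p40[of y] by simp
      qed
    next
      case False
      then have yR: "R < norm y" by simp
      have ny: "0 < norm y" using yR R0 by linarith
      have "norm y \<le> norm xb + norm (y - xb)" by (metis add.commute diff_add_cancel norm_triangle_ineq)
      moreover have "norm (y - xb) < 1" using yb by (simp add: dist_norm norm_minus_commute)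
      ultimately have y2: "norm y \<le> 2" using xbn rho rp rho2 by linarith
      have p2e: "p2 y = C2 / norm y ^ N" unfolding p2_def using yR y2 by simp
      show ?thesis
      proof (cases "y \<in> G")
        case True
        then have uy: "P / 2 \<le> u y" unfolding G_def Pr by simp
        have d: "u xb - u y \<le> - (P / 4)" using uy uxb2 TP4 by linarith
        have r0: "0 < norm (y - xb)" using rlow[OF yR] ny by linarith
        have r2: "norm (y - xb) \<le> 2 * norm y"
        proof -
          have "3 * \<rho>^2 \<le> norm y" using True Gsub unfolding A_def by auto
          moreover have "norm (y - xb) \<le> norm y + norm xb" by (rule norm_triangle_ineq4)
          ultimately show ?thesis using xbn rp by linarith
        qed
        have gy: "g y = (u xb - u y) / norm (y - xb) ^ N * K xb (y - xb)" using yb unfolding g_def F_def by simp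
        have K: "lam \<le> K xb (y - xb)" using Kxb[OF yb] by simp
        have "g y = (u xb - u y) * K xb (y - xb) / norm (y - xb) ^ N" unfolding gy by simp
        also have "\<dots> \<le> (- (P / 4)) * lam / norm (y - xb) ^ N"
        proof (intro divide_right_mono)
          have "(u xb - u y) * K xb (y - xb) \<le> (u xb - u y) * lam" using K d P0 by (intro mult_left_mono_neg) auto
          also have "\<dots> \<le> (- (P / 4)) * lam" using d lam by (intro mult_right_mono) auto
          finally show "(u xb - u y) * K xb (y - xb) \<le> (- (P / 4)) * lam" .
        qed simp
        also have "\<dots> \<le> (- (P / 4)) * lam / (2 * norm y) ^ N"
        proof -
          have "norm (y - xb) ^ N \<le> (2 * norm y) ^ N" using r2 by (intro power_mono) auto
          moreover have "0 < norm (y - xb) ^ N" using r0 by simp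
          moreover have "0 \<le> (P / 4) * lam" using P0 lam by simp
          ultimately have "(P / 4) * lam / (2 * norm y) ^ N \<le> (P / 4) * lam / norm (y - xb) ^ N"
            by (intro divide_left_mono) (auto intro!: mult_pos_pos)
          then show ?thesis by simp
        qed
        also have "\<dots> = - q y"
        proof -
          have e1: "(2 * norm y)^N = 2^N * norm y^N" by (rule power_mult_distrib)
          have e2: "(2::real)^(N+2) = 2^N * 4" by (simp add: power_add)
          have "q y = lam * P / (2^N * 4) / norm y ^ N" unfolding q_def C4_def e2 using True by simp
          then show ?thesis unfolding e1 using ny by (simp add: field_simps)
        qed
        finally show ?thesis using psum0[of y] by simp
      next
        case False
        then have q: "q y = 0" unfolding q_def by simp
        show ?thesis
        proof (cases "norm y < \<rho>")
          case True
          have "0 \<le> u y" using unn True by simp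
          then have d: "u xb - u y \<le> 2 * T" using uxb2 by simp
          have "g y \<le> 2 * T * (Lam * 5 ^ N) / norm y ^ N" using gbig[OF yb yR d] T0 by simp
          also have "\<dots> = p2 y" unfolding p2e C2_def by simp
          finally show ?thesis using q p10[of y] p30[of y] p40[of y] by simp
        next
          case False
          then have yr: "\<rho> \<le> norm y" by simp
          define E where "E = max 0 (ell (norm y) powr \<alpha> - ell \<rho> powr \<alpha>)"
          have E0: "0 \<le> E" unfolding E_def by simp
          have "u y \<ge> - E" using ulow yB unfolding E_def B_def by blast
          then have d: "u xb - u y \<le> 2 * T + E" using uxb2 by simp
          have "g y \<le> (2 * T + E) * (Lam * 5 ^ N) / norm y ^ N" using gbig[OF yb yR d] T0 E0 by simp
          also have "\<dots> = p2 y + C3 * E / norm y ^ N" unfolding p2e C2_def C3_def using ny by (simp add: field_simps)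
          also have "C3 * E / norm y ^ N \<le> p3 y + p4 y"
          proof (cases "norm y \<le> 1/10")
            case True
            have "ell (norm y) = inverse (- ln (norm y))" by (rule ell_small[OF ny True])
            then have "ell (norm y) powr \<alpha> = inverse ((- ln (norm y)) powr \<alpha>)" by (simp only: inverse_powr)
            then have "ell (norm y) powr \<alpha> = (- ln (norm y)) powr (-\<alpha>)" by (simp only: powr_minus)
            then have "E = E0 (norm y)" unfolding E_def E0_def Pr P_def using E00[OF yr True] unfolding E0_def by simp
            then show ?thesis unfolding p3_def using yr True p40[of y] by simp
          next
            case False
            have "ell (norm y) = 1 / ln 10" using False by (intro ell_large) simp
            moreover have "1 / ln 10 \<le> (1::real)" using exp_le by (simp add: ln_ge_iff)
            ultimately have "ell (norm y) powr \<alpha> \<le> 1" by (intro powr_le1) (use al in auto)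
            then have "E \<le> 1" unfolding E_def Pr using P0 by simp
            then have "C3 * E / norm y ^ N \<le> C3 / norm y ^ N" using C30 ny by (intro divide_right_mono mult_left_le) auto
            then show ?thesis unfolding p4_def using False y2 p30[of y] by simp
          qed
          finally show ?thesis using q p10[of y] by simp
        qed
      qed
    qed
  qed
  have ig: "integral\<^sup>L lebesgue g \<le> integral\<^sup>L lebesgue p1 + integral\<^sup>L lebesgue p2 + integral\<^sup>L lebesgue p3 + integral\<^sup>L lebesgue p4 - integral\<^sup>L lebesgue q"
  proof -
    have "integral\<^sup>L lebesgue g \<le> integral\<^sup>L lebesgue (\<lambda>y. p1 y + p2 y + p3 y + p4 y - q y)"
      using gi p1b(1) p2b(1) p3b(1) p4b(1) qi gP by (intro integral_mono) auto
    also have "\<dots> = integral\<^sup>L lebesgue p1 + integral\<^sup>L lebesgue p2 + integral\<^sup>L lebesgue p3 + integral\<^sup>L lebesgue p4 - integral\<^sup>L lebesgue q"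
      using p1b(1) p2b(1) p3b(1) p4b(1) qi by simp
    finally show ?thesis .
  qed
  define Lq where "Lq = L * P"
  have Lq0: "0 < Lq" unfolding Lq_def using L4 P0 by simp
  have P1: "P \<le> 1"
  proof -
    have "1 \<le> L powr \<alpha>" using L4 al by (intro ge_one_powr_ge_zero) auto
    then show ?thesis unfolding P_def powr_minus by (simp add: inverse_le_1_iff)
  qed
  have PLq: "P \<le> Lq" unfolding Lq_def using L4 P0 by simp
  have A0e: "A0 = \<sigma> * C3" unfolding A0_def C3_def by simp
  have fiveN: "1 \<le> (5::real) ^ N" by simp
  have i1: "integral\<^sup>L lebesgue p1 \<le> 16 * \<alpha> * A0 * Lq"
  proof -
    have "\<sigma> * (C1 * (4 * \<rho>^2)) = 16 * (\<sigma> * Lam) * T" unfolding C1_def using rp by (simp add: field_simps)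
    also have "\<dots> \<le> 16 * A0 * (\<alpha> * P)"
    proof -
      have "\<sigma> * Lam * 1 \<le> \<sigma> * Lam * 5 ^ N" using sig Lam0 fiveN by (intro mult_left_mono) auto
      then have "\<sigma> * Lam \<le> A0" unfolding A0_def by (simp add: mult.commute)
      then show ?thesis using TP T0 sig Lam0 A0 by (intro mult_mono) auto
    qed
    also have "\<dots> \<le> 16 * A0 * (\<alpha> * Lq)" using PLq A0 al by (intro mult_left_mono) auto
    finally have "\<sigma> * (C1 * (4 * \<rho>^2)) \<le> 16 * A0 * (\<alpha> * Lq)" .
    moreover have "16 * A0 * (\<alpha> * Lq) = 16 * \<alpha> * A0 * Lq" by (simp add: algebra_simps)
    ultimately show ?thesis using p1b(2) by linarith
  qed
  have i2: "integral\<^sup>L lebesgue p2 \<le> 6 * \<alpha> * A0 * Lq"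
  proof -
    have "ln (\<rho>^2) \<le> ln R" unfolding R_def using rp by (intro ln_mono) auto
    then have "- 2 * L \<le> ln R" unfolding L_def by (simp add: ln_realpow)
    moreover have "ln 2 \<le> (1::real)" using ln_le_minus_one[of 2] by simp
    ultimately have lnb: "ln 2 - ln R \<le> 3 * L" using L4 by linarith
    have "\<sigma> * (C2 * ln 2 - C2 * ln R) = 2 * T * A0 * (ln 2 - ln R)" unfolding C2_def A0_def by (simp add: algebra_simps)
    also have "\<dots> \<le> 2 * T * A0 * (3 * L)" using lnb T0 A0 by (intro mult_left_mono) auto
    also have "\<dots> = 6 * A0 * (T * L)" by simp
    also have "\<dots> \<le> 6 * A0 * (\<alpha> * P * L)" using TP L4 A0 by (intro mult_left_mono mult_right_mono) auto
    finally show ?thesis using p2b(2) unfolding Lq_def by (simp add: algebra_simps)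
  qed
  have i3: "integral\<^sup>L lebesgue p3 \<le> 2 * \<alpha> * A0 * Lq + 9 * A0"
  proof -
    have "L / (1-\<alpha>) - L = L * (\<alpha> / (1 - \<alpha>))" using al by (simp add: field_simps)
    also have "\<dots> \<le> L * (2 * \<alpha>)" using al L4 by (intro mult_left_mono) (auto simp: field_simps)
    finally have a1: "L / (1-\<alpha>) - L \<le> 2 * \<alpha> * L" by (simp add: algebra_simps)
    have "ln 10 \<le> (9::real)" using ln_le_minus_one[of 10] by simp
    moreover have "P * ln 10 \<le> 1 * ln 10" using P1 by (rule mult_right_mono) simp
    ultimately have "P * ln 10 \<le> 9" by linarith
    moreover have "P * (L / (1-\<alpha>) - L) \<le> P * (2 * \<alpha> * L)" using a1 P0 by (intro mult_left_mono) auto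
    ultimately have "I3 \<le> 2 * \<alpha> * Lq + 9" unfolding I3e Lq_def by (simp add: algebra_simps)
    then have "(\<sigma> * C3) * I3 \<le> (\<sigma> * C3) * (2 * \<alpha> * Lq + 9)" using sig C30 by (intro mult_left_mono) auto
    moreover have "\<sigma> * (C3 * I3) = (\<sigma> * C3) * I3" by simp
    moreover have "(\<sigma> * C3) * (2 * \<alpha> * Lq + 9) = 2 * \<alpha> * A0 * Lq + 9 * A0" unfolding A0e by (simp add: algebra_simps)
    ultimately show ?thesis using p3b(2) by linarith
  qed
  have i4: "integral\<^sup>L lebesgue p4 \<le> 19 * A0"
  proof -
    have "ln (1/10::real) = - ln 10" by (simp add: ln_div)
    moreover have "ln (20::real) = ln 2 + ln 10" using ln_mult[of 2 10] by simp
    moreover have "ln (20::real) \<le> 19" using ln_le_minus_one[of 20] by simp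
    ultimately have l: "ln 2 - ln (1/10) \<le> (19::real)" by linarith
    have "(\<sigma> * C3) * (ln 2 - ln (1/10)) \<le> (\<sigma> * C3) * 19" using l sig C30 by (intro mult_left_mono) auto
    moreover have "\<sigma> * (C3 * ln 2 - C3 * ln (1/10)) = (\<sigma> * C3) * (ln 2 - ln (1/10))" by (simp add: algebra_simps)
    ultimately show ?thesis using p4b(2) unfolding A0e by linarith
  qed
  have iq: "B0 * Lq \<le> integral\<^sup>L lebesgue q"
  proof -
    have e: "(2::real)^(N+5) = 2^(N+2) * 8" by (simp add: power_add)
    have "B0 * Lq = C4 * L * (\<sigma>b / 8)" unfolding B0_def C4_def Lq_def e by (simp add: field_simps)
    then show ?thesis using qlow by simp
  qed
  have "integral\<^sup>L lebesgue g \<le> 24 * \<alpha> * A0 * Lq + 28 * A0 - B0 * Lq" using ig i1 i2 i3 i4 iq by linarith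
  moreover have "24 * \<alpha> * A0 * Lq \<le> B0 / 4 * Lq"
  proof -
    have "0 < \<alpha> * A0" using al A0 by simp
    then have "24 * \<alpha> * A0 \<le> B0 / 4" using al3 by linarith
    then show ?thesis using Lq0 by (intro mult_right_mono) auto
  qed
  moreover have "28 * A0 \<le> B0 / 4 * Lq" using rho3 Lp A0 unfolding Lq_def by simp
  ultimately have gup: "integral\<^sup>L lebesgue g \<le> - (B0 / 2 * Lq)" by linarith
  have "L_K K u xb \<ge> - \<delta> * ell (\<rho>^2) powr (\<alpha> - 1)" using LK xbB by blast
  then have "integral\<^sup>L lebesgue g \<ge> - \<delta> * (2 powr (1-\<alpha>) * Lq)" unfolding LKg Pr3 Lp Lq_def .
  moreover have "\<delta> * (2 powr (1-\<alpha>) * Lq) \<le> B0 / 4 * Lq"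
  proof (cases "\<delta> \<le> 0")
    case True
    then have "\<delta> * (2 powr (1-\<alpha>) * Lq) \<le> 0" using Lq0 by (simp add: mult_nonpos_nonneg)
    moreover have "0 \<le> B0 / 4 * Lq" using B0 Lq0 by simp
    ultimately show ?thesis by linarith
  next
    case False
    have "2 powr (1-\<alpha>) \<le> 2 powr 1" using al by (intro powr_mono) auto
    then have "2 powr (1-\<alpha>) \<le> 2" by simp
    then have "\<delta> * (2 powr (1-\<alpha>) * Lq) \<le> \<delta> * (2 * Lq)" using False Lq0 by (intro mult_left_mono mult_right_mono) auto
    also have "\<dots> = (2 * \<delta>) * Lq" by simp
    also have "\<dots> \<le> B0 / 4 * Lq" using de' Lq0 by (intro mult_right_mono) auto
    finally show ?thesis .
  qed
  moreover have "0 < B0 * Lq" using B0 Lq0 by simp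
  ultimately show False using gup by linarith
qed


theorem lemma4p4:
  fixes lam Lam :: real
  assumes "0 < lam" and "lam \<le> Lam"
  shows "\<exists>r0 \<alpha> \<delta>. r0 \<in> {0<..<1} \<and> \<alpha> \<in> {0<..<1} \<and> \<delta> \<in> {0<..<1} \<and>
    (\<forall>(\<rho>::real) (K::'a::euclidean_space \<Rightarrow> 'a \<Rightarrow> real) (u::'a \<Rightarrow> real).
      \<rho> \<in> {0<..<r0} \<and>
      (\<lambda>(x, z). K x z) \<in> borel_measurable borel \<and>
      (\<forall>x\<in>ball 0 (2 * \<rho>^2). \<forall>z\<in>ball 0 1. lam \<le> K x z \<and> K x z \<le> Lam) \<and>
      set_integrable lebesgue (ball 0 (1 + 2 * \<rho>^2)) u \<and>
      dini_loc (ball 0 (2 * \<rho>^2)) u \<and>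
      (\<forall>x\<in>ball 0 (2 * \<rho>^2). L_K K u x \<ge> - \<delta> * ell (\<rho>^2) powr (\<alpha> - 1)) \<and>
      (\<forall>x\<in>ball 0 (1 + 2 * \<rho>^2). u x \<ge> - max 0 (ell (norm x) powr \<alpha> - ell \<rho> powr \<alpha>)) \<and>
      emeasure ell_measure ({x. u x \<ge> ell \<rho> powr \<alpha> / 2} \<inter> (ball 0 \<rho> - ball 0 (3 * \<rho>^2)))
        \<ge> ennreal (1/2) * emeasure ell_measure (ball 0 \<rho> - ball 0 (3 * \<rho>^2))
      \<longrightarrow> (\<forall>x\<in>ball 0 (\<rho>^2). u x \<ge> ell \<rho> powr \<alpha> - ell (\<rho>^2) powr \<alpha>))"

proof -
  define \<sigma>a where "\<sigma>a = real DIM('a) * unit_ball_vol DIM('a)"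
  define \<sigma>b where "\<sigma>b = real DIM('b) * unit_ball_vol DIM('b)"
  define A0 where "A0 = Lam * \<sigma>a * 5 ^ DIM('a)"
  define B0 where "B0 = lam * \<sigma>b / 2 ^ (DIM('a) + 5)"
  have A0: "0 < A0" unfolding A0_def \<sigma>a_def using assms by simp
  have B0: "0 < B0" unfolding B0_def \<sigma>b_def using assms by simp
  define \<alpha> where "\<alpha> = min (1/8) (B0 / (144 * A0))"
  define \<delta> where "\<delta> = min (1/2) (B0 / 8)"
  define M where "M = max 10 ((120 * A0 / B0)^2)"
  define r0 where "r0 = min (1/100) (exp (- M))"
  have al: "0 < \<alpha>" "\<alpha> \<le> 1/8" "36 * \<alpha> * A0 \<le> B0 / 4"
  proof -
    show "0 < \<alpha>" "\<alpha> \<le> 1/8" unfolding \<alpha>_def using A0 B0 by auto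
    have "\<alpha> \<le> B0 / (144 * A0)" unfolding \<alpha>_def by simp
    then have "\<alpha> * A0 \<le> B0 / (144 * A0) * A0" using A0 by (intro mult_right_mono) auto
    then show "36 * \<alpha> * A0 \<le> B0 / 4" using A0 by (simp add: field_simps)
  qed
  have de: "0 < \<delta>" "\<delta> < 1" "2 * \<delta> \<le> B0 / 4" unfolding \<delta>_def using B0 by auto
  have r0: "0 < r0" "r0 < 1" unfolding r0_def by auto
  have main: "30 * A0 \<le> B0 / 4 * (- ln \<rho>) powr (1 - \<alpha>)" "10 \<le> - ln \<rho>" "\<rho> < 1/100"
    if "0 < \<rho>" "\<rho> < r0" for \<rho> :: real
  proof -
    have "\<rho> < exp (- M)" using that unfolding r0_def by simp
    then have "ln \<rho> < - M" using that by (metis ln_exp ln_less_cancel_iff exp_gt_zero)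
    then have LM: "M < - ln \<rho>" by simp
    then show "10 \<le> - ln \<rho>" unfolding M_def by simp
    show "\<rho> < 1/100" using that unfolding r0_def by simp
    define L where "L = - ln \<rho>"
    have L1: "1 \<le> L" using LM unfolding L_def M_def by simp
    have "sqrt L = L powr (1/2)" using L1 by (simp add: powr_half_sqrt)
    also have "\<dots> \<le> L powr (1 - \<alpha>)" using L1 al by (intro powr_mono) auto
    finally have s1: "sqrt L \<le> L powr (1 - \<alpha>)" .
    have "(120 * A0 / B0)^2 \<le> L" using LM unfolding L_def M_def by simp
    then have "sqrt ((120 * A0 / B0)^2) \<le> sqrt L" by (rule real_sqrt_le_mono)
    then have "120 * A0 / B0 \<le> sqrt L" using A0 B0 by simp
    then have "B0 / 4 * (120 * A0 / B0) \<le> B0 / 4 * L powr (1 - \<alpha>)" using s1 B0 by (intro mult_left_mono) auto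
    then show "30 * A0 \<le> B0 / 4 * (- ln \<rho>) powr (1 - \<alpha>)" unfolding L_def using B0 by (simp add: field_simps)
  qed
  show ?thesis
    apply (rule exI[of _ r0], rule exI[of _ \<alpha>], rule exI[of _ \<delta>])
    apply (intro conjI)
       apply (use r0 in simp)
      apply (use al in simp)
     apply (use de in simp)
    apply (intro allI impI)
    apply (elim conjE)
    apply (rule ballI)
    apply (rule ccontr)
    subgoal for \<rho> K u x
      apply (rule core[of lam Lam \<alpha> \<rho> \<delta> K u x])
      using assms al de main[of \<rho>] unfolding A0_def B0_def \<sigma>a_def \<sigma>b_def
      by auto
    done
qed


end
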